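(* Let $d\geq 1$, $n\geq 1$, let $X^{(n)}=\{X_1,\dots,X_n\}\subset\mathbb{R}^d$ be a target sample and let $u^{(n)}=\{u_1,\dots,u_n\}\subset\mathbb{R}^d$ be a reference sample in general position (no more than $d$ of the points lie in any $(d-1)$-dimensional affine subspace). Let $\hat T$ be a solution of the discrete optimal transport problem from $u^{(n)}$ to $X^{(n)}$. Then for every $i\in\{1,\dots,n\}$, $$\mathrm{BP}(\hat T(u_i))\in\left[\mathrm{TD}(u_i;u^{(n)})-\frac{d-1}{n},\ \mathrm{TD}(u_i;u^{(n)})\right].$$
   Context: For finite sets $u^{(n)}=\{u_1,\dots,u_n\}$ and $Z^{(n)}=\{Z_1,\dots,Z_n\}$ in $\mathbb{R}^d$, let $\Gamma(u^{(n)},Z^{(n)})$ be the set of bijections $T:u^{(n)}\to Z^{(n)}$; an empirical optimal transport map $\hat T_{Z^{(n)}}$ is any minimizer of $T\mapsto\frac1n\sum_{i=1}^n\|T(u_i)-u_i\|^2$ over $\Gamma(u^{(n)},Z^{(n)})$, and $\hat T=\hat T_{X^{(n)}}$. For $\ell\in\{1,\dots,n\}$, $\mathcal{Q}_{\ell,n}$ is the set of all sets $Z^{(n)}=\{Z_1,\dots,Z_n\}\subset\mathbb{R}^d$ sharing exactly $n-\ell$ elements with $X^{(n)}$. The finite sample breakdown point is $$\mathrm{BP}(\hat T(u_i))=\frac1n\min\Big\{\ell\in\{1,\dots,n\}:\ \sup_{Z^{(n)}\in\mathcal{Q}_{\ell,n}}\|\hat T(u_i)-\hat T_{Z^{(n)}}(u_i)\|=\infty\Big\}.$$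 The Tukey depth of $x\in\mathbb{R}^d$ w.r.t. $u^{(n)}$ is $\mathrm{TD}(x;u^{(n)})=\min_{v\in\mathcal{S}^{d-1}}\frac1n\sum_{j=1}^n\mathbf{1}(\langle v,u_j-x\rangle\geq 0)$, where $\mathcal{S}^{d-1}$ is the unit sphere. *)

theory Defs
  imports "HOL-Analysis.Analysis"
begin

definition emp_cost :: "'a::euclidean_space set \<Rightarrow> ('a \<Rightarrow> 'a) \<Rightarrow> real" where
  "emp_cost U T = (\<Sum>u\<in>U. (norm (T u - u))\<^sup>2) / real (card U)"

definition is_emp_OT :: "'a::euclidean_space set \<Rightarrow> 'a set \<Rightarrow> ('a \<Rightarrow> 'a) \<Rightarrow> bool" where
  "is_emp_OT U Z T \<longleftrightarrow> bij_betw T U Z \<and>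
     (\<forall>T'. bij_betw T' U Z \<longrightarrow> emp_cost U T \<le> emp_cost U T')"

definition corrupted :: "nat \<Rightarrow> 'a set \<Rightarrow> 'a set set" where
  "corrupted l X = {Z. finite Z \<and> card Z = card X \<and> card (Z \<inter> X) = card X - l}"

text \<open>Finite sample breakdown point of the value at x of the selected empirical OT map;
  sel Z is the chosen empirical OT map onto Z, and the estimator is sel X.\<close>
definition breakdown_point :: "('a set \<Rightarrow> 'a \<Rightarrow> 'a::real_normed_vector) \<Rightarrow> 'a set \<Rightarrow> 'a \<Rightarrow> real" where
  "breakdown_point sel X x =
     real (LEAST l. 1 \<le> l \<and> l \<le> card X \<and>
        \<not> bdd_above ((\<lambda>Z. norm (sel X x - sel Z x)) ` corrupted l X)) / real (card X)"

definition tukey_depth :: "'a::euclidean_space \<Rightarrow> 'a set \<Rightarrow> real" where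
  "tukey_depth x U = Inf ((\<lambda>v. real (card {u\<in>U. inner v (u - x) \<ge> 0}) / real (card U))
                          ` sphere 0 1)"

definition general_position :: "'a::euclidean_space set \<Rightarrow> bool" where
  "general_position U \<longleftrightarrow>
     (\<forall>A. affine A \<and> aff_dim A = int DIM('a) - 1 \<longrightarrow> card (U \<inter> A) \<le> DIM('a))"

end

theory Submission
  imports Defs
begin

lemma ot_mono:
  assumes ot: "is_emp_OT U Z T" and fin: "finite U" and uU: "u \<in> U" and wU: "w \<in> U"
  shows "inner (T u - T w) (u - w) \<ge> 0"
proof (cases "u = w")
  case True then show ?thesis by simp
next
  case False
  define s where "s = (\<lambda>y. if y = u then w else if y = w then u else y)"
  have bs: "bij_betw s U U"
    by (rule bij_betw_byWitness[where f'=s]) (auto simp: s_def uU wU)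
  have bT: "bij_betw T U Z" and opt: "\<And>T'. bij_betw T' U Z \<Longrightarrow> emp_cost U T \<le> emp_cost U T'"
    using ot unfolding is_emp_OT_def by auto
  have "bij_betw (T \<circ> s) U Z" using bij_betw_trans[OF bs bT] .
  hence c: "emp_cost U T \<le> emp_cost U (T \<circ> s)" by (rule opt)
  have cp: "real (card U) > 0" using fin uU card_gt_0_iff by force
  have S: "(\<Sum>y\<in>U. (norm (T y - y))\<^sup>2) \<le> (\<Sum>y\<in>U. (norm ((T \<circ> s) y - y))\<^sup>2)"
    using c cp unfolding emp_cost_def by (simp add: divide_le_cancel)
  have split: "\<And>f::'a \<Rightarrow> real. (\<Sum>y\<in>U. f y) = f u + f w + (\<Sum>y\<in>U - {u} - {w}. f y)"
  proof -
    fix f :: "'a \<Rightarrow> real"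
    have "sum f U = f u + sum f (U-{u})" by (rule sum.remove[OF fin uU])
    moreover have "sum f (U-{u}) = f w + sum f (U-{u}-{w})"
      by (rule sum.remove) (use fin wU False in auto)
    ultimately show "(\<Sum>y\<in>U. f y) = f u + f w + (\<Sum>y\<in>U - {u} - {w}. f y)" by simp
  qed
  have rest: "(\<Sum>y\<in>U - {u} - {w}. (norm ((T \<circ> s) y - y))\<^sup>2) = (\<Sum>y\<in>U - {u} - {w}. (norm (T y - y))\<^sup>2)"
    by (rule sum.cong) (auto simp: s_def)
  have su: "s u = w" and sw: "s w = u" using False by (auto simp: s_def)
  have "(norm (T u - u))\<^sup>2 + (norm (T w - w))\<^sup>2 \<le> (norm (T w - u))\<^sup>2 + (norm (T u - w))\<^sup>2"
    using S split[of "\<lambda>y. (norm (T y - y))\<^sup>2"] split[of "\<lambda>y. (norm ((T \<circ> s) y - y))\<^sup>2"] rest su sw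
    by simp
  then show ?thesis
    by (simp add: power2_norm_eq_inner inner_diff_left inner_diff_right inner_commute algebra_simps)
qed


lemma sphere_ne: "sphere (0::'a::euclidean_space) 1 \<noteq> {}"
proof -
  obtain b :: 'a where "b \<in> Basis" using nonempty_Basis by blast
  then have "b \<in> sphere 0 1" by simp
  then show ?thesis by blast
qed

lemma gp_eps:
  fixes U :: "'a::euclidean_space set"
  assumes fin: "finite U" and gp: "general_position U"
  shows "\<exists>\<epsilon>>0. \<forall>v\<in>sphere 0 1. card {u\<in>U. \<bar>inner v (u - x)\<bar> \<le> \<epsilon>} \<le> DIM('a)"
proof -
  define F where "F = {S. S \<subseteq> U \<and> DIM('a) < card S}"
  have finF: "finite F" using fin unfolding F_def by simp
  have key: "\<exists>e>0. \<forall>v\<in>sphere 0 1. \<exists>u\<in>S. e < \<bar>inner v (u - x)\<bar>" if SF: "S \<in> F" for S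
  proof -
    have SU: "S \<subseteq> U" and cS: "DIM('a) < card S" using SF unfolding F_def by auto
    have finS: "finite S" using SU fin finite_subset by blast
    define g where "g = (\<lambda>v. \<Sum>u\<in>S. \<bar>inner v (u - x)\<bar>)"
    have cg: "continuous_on (sphere 0 1) g" unfolding g_def by (intro continuous_intros)
    obtain v0 where v0: "v0 \<in> sphere 0 1" and v0m: "\<And>v. v \<in> sphere 0 1 \<Longrightarrow> g v0 \<le> g v"
      using continuous_attains_inf[OF compact_sphere sphere_ne cg] by blast
    have gpos: "g v0 > 0"
    proof (rule ccontr)
      assume "\<not> g v0 > 0"
      hence "g v0 = 0" unfolding g_def by (smt (verit) sum_nonneg abs_ge_zero)
      hence z: "\<forall>u\<in>S. \<bar>inner v0 (u - x)\<bar> = 0" unfolding g_def using finS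
        by (subst (asm) sum_nonneg_eq_0_iff) auto
      define A where "A = {y. v0 \<bullet> y = v0 \<bullet> x}"
      have v0nz: "v0 \<noteq> 0" using v0 by auto
      have aA: "affine A" unfolding A_def by (rule affine_hyperplane)
      have dA: "aff_dim A = int DIM('a) - 1" unfolding A_def using v0nz by simp
      have "S \<subseteq> U \<inter> A" using SU z unfolding A_def by (auto simp: inner_diff_right)
      hence "card S \<le> card (U \<inter> A)" using fin by (simp add: card_mono)
      moreover have "card (U \<inter> A) \<le> DIM('a)" using gp aA dA unfolding general_position_def by blast
      ultimately show False using cS by simp
    qed
    define e where "e = g v0 / (real (card S) + 1)"
    have epos: "e > 0" unfolding e_def using gpos by simp
    show ?thesis
    proof (intro exI[of _ e] conjI epos ballI)
      fix v assume v: "v \<in> sphere (0::'a) 1"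
      show "\<exists>u\<in>S. e < \<bar>inner v (u - x)\<bar>"
      proof (rule ccontr)
        assume "\<not> ?thesis"
        hence "\<forall>u\<in>S. \<bar>inner v (u - x)\<bar> \<le> e" by auto
        hence "g v \<le> real (card S) * e" unfolding g_def by (metis sum_bounded_above)
        also have "\<dots> < g v0" unfolding e_def using gpos by (simp add: field_simps)
        finally show False using v0m[OF v] by simp
      qed
    qed
  qed
  then obtain e where e: "\<And>S. S \<in> F \<Longrightarrow> e S > 0 \<and> (\<forall>v\<in>sphere 0 1. \<exists>u\<in>S. e S < \<bar>inner v (u - x)\<bar>)"
    by metis
  define \<epsilon> where "\<epsilon> = Min (insert 1 (e ` F))"
  have epos: "\<epsilon> > 0" unfolding \<epsilon>_def using finF e by (simp add: Min_gr_iff)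
  have ele: "\<And>S. S \<in> F \<Longrightarrow> \<epsilon> \<le> e S" unfolding \<epsilon>_def using finF by simp
  show ?thesis
  proof (intro exI[of _ \<epsilon>] conjI epos ballI)
    fix v assume v: "v \<in> sphere (0::'a) 1"
    define N where "N = {u\<in>U. \<bar>inner v (u - x)\<bar> \<le> \<epsilon>}"
    show "card N \<le> DIM('a)"
    proof (rule ccontr)
      assume "\<not> ?thesis"
      hence NF: "N \<in> F" unfolding F_def N_def by auto
      then obtain u where "u \<in> N" "e N < \<bar>inner v (u - x)\<bar>" using e v by blast
      then show False using ele[OF NF] unfolding N_def by auto
    qed
  qed
qed


lemma fin_ub: "finite A \<Longrightarrow> \<exists>R\<ge>0. \<forall>y\<in>A. (f y::real) \<le> R"
  by (intro exI[of _ "Max (insert 0 (f ` A))"]) auto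

lemma fin_lb: "finite A \<Longrightarrow> \<forall>y\<in>A. (f y::real) > 0 \<Longrightarrow> \<exists>d>0. \<forall>y\<in>A. d \<le> f y"
  by (intro exI[of _ "Min (insert 1 (f ` A))"]) (auto simp: Min_gr_iff)

lemma breaks:
  fixes U X :: "'a::euclidean_space set" and sel :: "'a set \<Rightarrow> 'a \<Rightarrow> 'a"
  assumes finU: "finite U" and finX: "finite X" and cU: "card U = n" and cX: "card X = n"
    and selp: "\<forall>Z. finite Z \<and> card Z = n \<longrightarrow> is_emp_OT U Z (sel Z)"
    and xU: "x \<in> U" and v0: "v0 \<in> sphere 0 1"
    and kdef: "card {u\<in>U. inner v0 (u - x) \<ge> 0} = k"
  shows "\<not> bdd_above ((\<lambda>Z. norm (sel X x - sel Z x)) ` corrupted k X)"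
proof
  assume "bdd_above ((\<lambda>Z. norm (sel X x - sel Z x)) ` corrupted k X)"
  then obtain M where M: "\<And>Z. Z \<in> corrupted k X \<Longrightarrow> norm (sel X x - sel Z x) \<le> M"
    unfolding bdd_above_def by auto
  define H where "H = {u\<in>U. inner v0 (u - x) \<ge> 0}"
  have xH: "x \<in> H" unfolding H_def using xU by simp
  have finH: "finite H" unfolding H_def using finU by simp
  have cH: "card H = k" using kdef unfolding H_def .
  have "card H > 0" using finH xH by (auto simp: card_gt_0_iff)
  hence k1: "k \<ge> 1" using cH by simp
  have kn: "k \<le> n" proof -
    have "card H \<le> card U" by (rule card_mono[OF finU]) (auto simp: H_def)
    thus ?thesis using cH cU by simp
  qed
  obtain X' where X'X: "X' \<subseteq> X" and cX': "card X' = n - k" and finX': "finite X'"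
    using obtain_subset_with_card_n[of "n - k" X] cX by auto
  obtain R where R0: "R \<ge> 0" and R: "\<And>y. y \<in> X \<Longrightarrow> norm y \<le> R"
    using fin_ub[OF finX, of norm] by auto
  obtain D where D0: "D \<ge> 0" and D: "\<And>u. u \<in> U \<Longrightarrow> norm (x - u) \<le> D"
    using fin_ub[OF finU, of "\<lambda>u. norm (x - u)"] by auto
  have "\<forall>u\<in>U - H. inner v0 (x - u) > 0" unfolding H_def by (auto simp: inner_diff_right)
  then obtain \<delta> where \<delta>0: "\<delta> > 0" and \<delta>: "\<And>u. u \<in> U - H \<Longrightarrow> \<delta> \<le> inner v0 (x - u)"
    using fin_lb[of "U - H" "\<lambda>u. inner v0 (x - u)"] finU by auto
  define t where "t = R * D / \<delta> + \<bar>M\<bar> + norm (sel X x) + R + 1"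
  have RDd: "R * D / \<delta> \<ge> 0" using R0 D0 \<delta>0 by simp
  have nsel: "norm (sel X x) \<ge> 0" by simp
  have tRD: "t * \<delta> > R * D"
  proof -
    have "t > R * D / \<delta>" unfolding t_def using R0 nsel by linarith
    thus ?thesis using \<delta>0 by (simp add: pos_divide_less_eq)
  qed
  have tR: "t > R" unfolding t_def using RDd nsel by linarith
  have tM: "t > M + norm (sel X x)" unfolding t_def using RDd R0 by linarith
  have nv0: "norm v0 = 1" using v0 by simp
  define F where "F = (\<lambda>j. (t + real j) *\<^sub>R v0) ` {..<k}"
  have injF: "inj_on (\<lambda>j. (t + real j) *\<^sub>R v0) {..<k}"
    using nv0 by (intro inj_onI) (auto simp: scaleR_cancel_right)
  have cF: "card F = k" unfolding F_def using card_image[OF injF] by simp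
  have finF: "finite F" unfolding F_def by simp
  have normF: "\<And>z. z \<in> F \<Longrightarrow> norm z \<ge> t" unfolding F_def using nv0 tR R0 by auto
  have FX: "F \<inter> X = {}" using normF R tR by force
  define Z where "Z = X' \<union> F"
  have finZ: "finite Z" unfolding Z_def using finX' finF by simp
  have cZ: "card Z = n" unfolding Z_def using FX X'X cX' cF kn finX' finF
    by (subst card_Un_disjoint) auto
  have ZX: "Z \<inter> X = X'" unfolding Z_def using FX X'X by auto
  have Zc: "Z \<in> corrupted k X" unfolding corrupted_def using finZ cZ ZX cX' cX by simp
  define T where "T = sel Z"
  have ot: "is_emp_OT U Z T" unfolding T_def using selp finZ cZ by simp
  have bT: "bij_betw T U Z" using ot unfolding is_emp_OT_def by simp
  have TxF: "T x \<in> F"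
  proof (rule ccontr)
    assume nF: "T x \<notin> F"
    define P where "P = {u\<in>U. T u \<in> F}"
    have "T ` P = F" unfolding P_def using bT unfolding Z_def bij_betw_def by auto
    moreover have "inj_on T P" using bT unfolding bij_betw_def P_def by (auto intro: inj_on_subset)
    ultimately have cP: "card P = k" using cF card_image by fastforce
    have xP: "x \<notin> P" unfolding P_def using nF by simp
    have "\<not> P \<subseteq> H"
    proof
      assume "P \<subseteq> H"
      hence "P \<subseteq> H - {x}" using xP by auto
      hence "card P \<le> card (H - {x})" using finH by (simp add: card_mono)
      also have "\<dots> = k - 1" using cH xH finH by simp
      finally show False using cP k1 by simp
    qed
    then obtain u where uP: "u \<in> P" and uH: "u \<notin> H" by auto
    have uU: "u \<in> U" and TuF: "T u \<in> F" using uP unfolding P_def by auto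
    then obtain j where Tu: "T u = (t + real j) *\<^sub>R v0" unfolding F_def by auto
    have du: "\<delta> \<le> inner v0 (x - u)" using \<delta> uU uH by simp
    have mono: "inner (T x - T u) (x - u) \<ge> 0" using ot_mono[OF ot finU xU uU] .
    have TxX: "T x \<in> X" using nF bT xU X'X unfolding bij_betw_def Z_def by auto
    have "t * \<delta> \<le> (t + real j) * inner v0 (x - u)"
      by (rule mult_mono) (use du tR R0 \<delta>0 in auto)
    also have "\<dots> = inner (T u) (x - u)" unfolding Tu by simp
    also have "\<dots> \<le> inner (T x) (x - u)" using mono by (simp add: inner_diff_left)
    also have "\<dots> \<le> norm (T x) * norm (x - u)" by (rule norm_cauchy_schwarz)
    also have "\<dots> \<le> R * D" using R[OF TxX] D[OF uU] by (simp add: mult_mono')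
    finally show False using tRD by simp
  qed
  have "norm (T x) \<ge> t" using normF TxF .
  hence "norm (sel X x - sel Z x) > M" using tM unfolding T_def
    by (smt (verit) norm_triangle_ineq2 norm_minus_commute)
  thus False using M[OF Zc] by simp
qed


lemma bounded_part:
  fixes U X :: "'a::euclidean_space set" and sel :: "'a set \<Rightarrow> 'a \<Rightarrow> 'a"
  assumes finU: "finite U" and finX: "finite X" and cU: "card U = n" and cX: "card X = n"
    and selp: "\<forall>Z. finite Z \<and> card Z = n \<longrightarrow> is_emp_OT U Z (sel Z)"
    and xU: "x \<in> U" and e0: "\<epsilon> > 0"
    and eps: "\<forall>v\<in>sphere 0 1. card {u\<in>U. \<bar>inner v (u - x)\<bar> \<le> \<epsilon>} \<le> DIM('a)"
    and kmin: "\<forall>v\<in>sphere 0 1. k \<le> card {u\<in>U. inner v (u - x) \<ge> 0}"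
    and lk: "l + DIM('a) \<le> k"
  shows "bdd_above ((\<lambda>Z. norm (sel X x - sel Z x)) ` corrupted l X)"
proof -
  obtain R where R0: "R \<ge> 0" and R: "\<And>y. y \<in> X \<Longrightarrow> norm y \<le> R"
    using fin_ub[OF finX, of norm] by auto
  obtain D where D0: "D \<ge> 0" and D: "\<And>u. u \<in> U \<Longrightarrow> norm (u - x) \<le> D"
    using fin_ub[OF finU, of "\<lambda>u. norm (u - x)"] by auto
  define B where "B = R + R * D / \<epsilon>"
  have lnl: "l \<le> n"
  proof -
    obtain v :: 'a where v: "v \<in> sphere 0 1" using sphere_ne by blast
    have "card {u\<in>U. inner v (u - x) \<ge> 0} \<le> card U" by (rule card_mono[OF finU]) auto
    thus ?thesis using kmin v lk cU by fastforce
  qed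
  have RDe: "R * D / \<epsilon> \<ge> 0" using R0 D0 e0 by simp
  have main: "norm (sel Z x) \<le> B" if Zc: "Z \<in> corrupted l X" for Z
  proof (rule ccontr)
    assume big: "\<not> norm (sel Z x) \<le> B"
    have finZ: "finite Z" and cZ: "card Z = n" and cZX: "card (Z \<inter> X) = n - l"
      using Zc cX unfolding corrupted_def by auto
    define T where "T = sel Z"
    have ot: "is_emp_OT U Z T" unfolding T_def using selp finZ cZ by simp
    have bT: "bij_betw T U Z" using ot unfolding is_emp_OT_def by simp
    define z where "z = T x"
    have zR: "norm z > R" and zRD: "norm z > R * D / \<epsilon>"
      using big RDe R0 unfolding z_def T_def B_def by linarith+
    have zX: "z \<notin> X" using zR R by force
    have nz: "norm z > 0" using zR R0 by linarith
    define v where "v = z /\<^sub>R norm z"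
    have vs: "v \<in> sphere 0 1" unfolding v_def using nz by simp
    define Q where "Q = {u\<in>U. T u \<notin> X}"
    have "T ` Q = Z - X" unfolding Q_def using bT unfolding bij_betw_def by auto
    moreover have "inj_on T Q" using bT unfolding bij_betw_def Q_def by (auto intro: inj_on_subset)
    ultimately have "card Q = card (Z - X)" using card_image by fastforce
    also have "\<dots> = card Z - card (Z \<inter> X)" using finZ by (simp add: card_Diff_subset_Int)
    also have "\<dots> = l" using cZ cZX lnl by simp
    finally have cQ: "card Q = l" .
    have xQ: "x \<in> Q" unfolding Q_def using xU zX z_def by simp
    define P where "P = {u\<in>U. inner v (u - x) > \<epsilon>}"
    have PQ: "P \<subseteq> Q - {x}"
    proof
      fix u assume uP: "u \<in> P"
      have uU: "u \<in> U" and ue: "inner v (u - x) > \<epsilon>" using uP unfolding P_def by auto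
      have ux: "u \<noteq> x" using ue e0 by auto
      have "T u \<notin> X"
      proof
        assume TuX: "T u \<in> X"
        have mono: "inner (T x - T u) (x - u) \<ge> 0" using ot_mono[OF ot finU xU uU] .
        have "inner z (u - x) \<le> inner (T u) (u - x)"
          using mono unfolding z_def by (simp add: inner_diff_left inner_diff_right algebra_simps)
        also have "\<dots> \<le> norm (T u) * norm (u - x)" by (rule norm_cauchy_schwarz)
        also have "\<dots> \<le> R * D" using R[OF TuX] D[OF uU] by (simp add: mult_mono')
        finally have a: "inner z (u - x) \<le> R * D" .
        have "inner v (u - x) = inner z (u - x) / norm z" unfolding v_def by (simp add: divide_inverse mult.commute)
        also have "\<dots> \<le> R * D / norm z" using a nz by (simp add: divide_right_mono)
        also have "\<dots> < \<epsilon>" proof -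
          have "R * D < \<epsilon> * norm z" using zRD e0 by (simp add: pos_divide_less_eq mult.commute)
          thus ?thesis using nz by (simp add: pos_divide_less_eq mult.commute)
        qed
        finally show False using ue by simp
      qed
      thus "u \<in> Q - {x}" unfolding Q_def using uU ux by simp
    qed
    have finQ: "finite Q" unfolding Q_def using finU by simp
    have cP: "card P \<le> l - 1"
    proof -
      have "card P \<le> card (Q - {x})" using PQ finQ by (simp add: card_mono)
      thus ?thesis using cQ xQ finQ by simp
    qed
    define N where "N = {u\<in>U. \<bar>inner v (u - x)\<bar> \<le> \<epsilon>}"
    have "{u\<in>U. inner v (u - x) \<ge> 0} \<subseteq> P \<union> N" unfolding P_def N_def by auto
    hence "card {u\<in>U. inner v (u - x) \<ge> 0} \<le> card (P \<union> N)"
      using finU unfolding P_def N_def by (simp add: card_mono)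
    also have "\<dots> \<le> card P + card N" by (rule card_Un_le)
    also have "\<dots> \<le> card P + DIM('a)" using eps vs unfolding N_def by simp
    finally have "k \<le> card P + DIM('a)" using kmin vs by (meson le_trans)
    hence "l \<le> card P" using lk by simp
    moreover have "l \<ge> 1" using cQ xQ finQ by (metis One_nat_def Suc_leI card_gt_0_iff empty_iff)
    ultimately show False using cP by simp
  qed
  show ?thesis unfolding bdd_above_def
  proof (intro exI ballI)
    fix r assume "r \<in> (\<lambda>Z. norm (sel X x - sel Z x)) ` corrupted l X"
    then obtain Z where Zc: "Z \<in> corrupted l X" and r: "r = norm (sel X x - sel Z x)" by auto
    show "r \<le> norm (sel X x) + B" using main[OF Zc] r norm_triangle_ineq4[of "sel X x" "sel Z x"] by simp
  qed
qed


theorem mainTheorem1: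
  fixes U X :: "'a::euclidean_space set"
    and sel :: "'a set \<Rightarrow> 'a \<Rightarrow> 'a"
    and n :: nat and x :: 'a
  assumes "finite U" and "finite X"
    and "card U = n" and "card X = n" and "n \<ge> 1"
    and "general_position U"
    and "\<forall>Z. finite Z \<and> card Z = n \<longrightarrow> is_emp_OT U Z (sel Z)"
    and "x \<in> U"
  shows "breakdown_point sel X x \<in>
           {tukey_depth x U - (real DIM('a) - 1) / real n .. tukey_depth x U}"
proof -
  note finU = assms(1) and finX = assms(2) and cU = assms(3) and cX = assms(4)
    and n1 = assms(5) and gp = assms(6) and selp = assms(7) and xU = assms(8)
  define cnt where "cnt = (\<lambda>v::'a. card {u\<in>U. inner v (u - x) \<ge> 0})"
  have cle: "cnt v \<le> n" for v
  proof -
    have "card {u\<in>U. inner v (u - x) \<ge> 0} \<le> card U" by (rule card_mono[OF finU]) auto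
    thus ?thesis using cU unfolding cnt_def by simp
  qed
  have cs: "cnt ` sphere 0 1 \<subseteq> {..n}" using cle by auto
  hence finc: "finite (cnt ` sphere 0 1)" using finite_subset by blast
  have nec: "cnt ` sphere 0 1 \<noteq> {}" using sphere_ne by blast
  define k where "k = Min (cnt ` sphere 0 1)"
  obtain v0 where v0: "v0 \<in> sphere 0 1" and cv0: "cnt v0 = k"
    using Min_in[OF finc nec] unfolding k_def by auto
  have kmin: "\<forall>v\<in>sphere 0 1. k \<le> cnt v" unfolding k_def using finc by simp
  have k1: "k \<ge> 1"
  proof -
    have "x \<in> {u\<in>U. inner v0 (u - x) \<ge> 0}" using xU by simp
    moreover have "finite {u\<in>U. inner v0 (u - x) \<ge> 0}" using finU by simp
    ultimately have "card {u\<in>U. inner v0 (u - x) \<ge> 0} > 0" by (auto simp: card_gt_0_iff)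
    thus ?thesis using cv0 unfolding cnt_def by simp
  qed
  have kn: "k \<le> n" using cle cv0 by metis
  have TD: "tukey_depth x U = real k / real n"
    unfolding tukey_depth_def cU
  proof (rule cInf_eq_minimum)
    show "real k / real n \<in> (\<lambda>v. real (card {u \<in> U. 0 \<le> v \<bullet> (u - x)}) / real n) ` sphere 0 1"
      using v0 cv0 unfolding cnt_def by force
  next
    fix r assume "r \<in> (\<lambda>v. real (card {u \<in> U. 0 \<le> v \<bullet> (u - x)}) / real n) ` sphere 0 1"
    then obtain v where v: "v \<in> sphere 0 1" and r: "r = real (cnt v) / real n" unfolding cnt_def by auto
    show "real k / real n \<le> r" unfolding r using kmin v by (simp add: divide_right_mono)
  qed
  have brk: "\<not> bdd_above ((\<lambda>Z. norm (sel X x - sel Z x)) ` corrupted k X)"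
    by (rule breaks[OF finU finX cU cX selp xU v0]) (use cv0 in \<open>simp add: cnt_def\<close>)
  obtain \<epsilon> where e0: "\<epsilon> > 0" and eps: "\<forall>v\<in>sphere 0 1. card {u\<in>U. \<bar>inner v (u - x)\<bar> \<le> \<epsilon>} \<le> DIM('a)"
    using gp_eps[OF finU gp] by blast
  define Pr where "Pr = (\<lambda>l. 1 \<le> l \<and> l \<le> card X \<and>
        \<not> bdd_above ((\<lambda>Z. norm (sel X x - sel Z x)) ` corrupted l X))"
  define L where "L = (LEAST l. Pr l)"
  have Pk: "Pr k" unfolding Pr_def using k1 kn cX brk by simp
  have Lk: "L \<le> k" unfolding L_def using Pk by (rule Least_le)
  have PL: "Pr L" unfolding L_def using Pk by (rule LeastI)
  have kmin': "\<forall>v\<in>sphere 0 1. k \<le> card {u\<in>U. inner v (u - x) \<ge> 0}" using kmin unfolding cnt_def .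
  have "\<not> L + DIM('a) \<le> k"
  proof
    assume h: "L + DIM('a) \<le> k"
    have "bdd_above ((\<lambda>Z. norm (sel X x - sel Z x)) ` corrupted L X)"
      by (rule bounded_part[OF finU finX cU cX selp xU e0 eps kmin' h])
    thus False using PL unfolding Pr_def by simp
  qed
  hence Lge: "real k - (real DIM('a) - 1) \<le> real L" by linarith
  have BP: "breakdown_point sel X x = real L / real n"
    unfolding breakdown_point_def L_def Pr_def cX by simp
  have np: "real n > 0" using n1 by simp
  have a: "real k / real n - (real DIM('a) - 1) / real n \<le> real L / real n"
  proof -
    have "(real k - (real DIM('a) - 1)) / real n \<le> real L / real n"
      by (rule divide_right_mono) (use Lge np in auto)
    thus ?thesis by (simp add: diff_divide_distrib)
  qed
  have b: "real L / real n \<le> real k / real n" using Lk np by (simp add: divide_right_mono)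
  show ?thesis unfolding BP TD using a b by simp
qed

end
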